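(* Let $F(z)=\sum_{n=0}^{\infty}c_nz^n$ be analytic on the unit disc $\mathbb{D}$ with real coefficients $c_n$. Let $U(z)=\Re e\,F(z)$ and suppose $U$ has $L^{1}_{loc}$-boundary behavior on $\partial\mathbb{D}\setminus\{1\}$. Assume there is $\theta_0\in(0,\pi)$ such that one of the following holds: (b.1) there is $c\geq0$ such that $U(re^{i\theta})\geq -c$ for $\theta\in(-\theta_0,\theta_0)$ and $r\in[0,1)$; (b.2) $\sup_{0<r<1}\int_{-\theta_0}^{\theta_0}|U(re^{i\theta})|\,\mathrm{d}\theta<\infty$; (b.3) there are $g\in L^{1}(-\theta_0,\theta_0)$ and $k\in\mathbb{N}$ such that $U(re^{i\theta})=O((1-r)^{-k})$ for $\theta\in(-\theta_0,\theta_0)$, $r\in[0,1)$, and $U(re^{i\theta})\geq g(\theta)$ for a.e. $\theta\in(-\theta_0,\theta_0)$ and all $r\in[0,1)$. Then the sequence $\{c_n\}_{n=0}^\infty$ converges, and $\lim_{n\to\infty}c_n=\lim_{r\to1^{-}}(1-r)U(r)$.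
   Context: $U$ has $L^{1}_{loc}$-boundary behavior on $\partial\mathbb{D}\setminus\{1\}$ means: there is $f\in L^{1}_{loc}(0,2\pi)$ such that for every compact interval $J\subset(0,2\pi)$, $\lim_{r\to1^{-}}\int_J|U(re^{i\theta})-f(\theta)|\,\mathrm{d}\theta=0$. *)

theory Defs
  imports "HOL-Analysis.Analysis"
begin

definition psF :: "(nat \<Rightarrow> real) \<Rightarrow> complex \<Rightarrow> complex" where
  "psF c z = (\<Sum>n. complex_of_real (c n) * z ^ n)"

definition psU :: "(nat \<Rightarrow> real) \<Rightarrow> complex \<Rightarrow> real" where
  "psU c z = Re (psF c z)"

definition L1loc_boundary :: "(complex \<Rightarrow> real) \<Rightarrow> bool" where
  "L1loc_boundary U \<longleftrightarrow>
     (\<exists>f :: real \<Rightarrow> real.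
        (\<forall>a b. 0 < a \<longrightarrow> b < 2 * pi \<longrightarrow> f absolutely_integrable_on {a..b}) \<and>
        (\<forall>a b. 0 < a \<longrightarrow> a \<le> b \<longrightarrow> b < 2 * pi \<longrightarrow>
           ((\<lambda>r. integral {a..b} (\<lambda>\<theta>. \<bar>U (complex_of_real r * cis \<theta>) - f \<theta>\<bar>))
              \<longlongrightarrow> 0) (at_left 1)))"

end

theory Submission
  imports Defs
begin

lemma cos_int_0T:
  fixes m :: int assumes "m \<noteq> 0"
  shows "((\<lambda>t. cos (of_int m * t)) has_integral 0) {0..2*pi}"
proof -
  have d: "((\<lambda>t. sin (of_int m * t) / of_int m) has_real_derivative cos (of_int m * x)) (at x within {0..2*pi})" for x
    using assms by (auto intro!: derivative_eq_intros simp: field_simps)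
  have "((\<lambda>t. cos (of_int m * t)) has_integral (sin (of_int m * (2*pi)) / of_int m - sin (of_int m * 0) / of_int m)) {0..2*pi}"
    apply (rule fundamental_theorem_of_calculus)
    using d by (auto simp: has_real_derivative_iff_has_vector_derivative[symmetric])
  moreover have "sin (of_int m * (2*pi)) = 0"
    using sin_npi_int[of "2*m"] by (simp add: mult_ac)
  ultimately show ?thesis by simp
qed

lemma cos_prod_int:
  fixes k n :: nat
  shows "((\<lambda>t. cos (real k * t) * cos (real n * t)) has_integral
           (if k = n then (if n = 0 then 2*pi else pi) else 0)) {0..2*pi}"
proof -
  have eq: "cos (real k * t) * cos (real n * t) =
        cos (of_int (int k - int n) * t) / 2 + cos (of_int (int k + int n) * t) / 2" for t
    by (simp add: cos_times_cos algebra_simps add_divide_distrib)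
  show ?thesis
  proof (cases "k = n")
    case True
    show ?thesis
    proof (cases "n = 0")
      case True with \<open>k = n\<close> show ?thesis
        using has_integral_const_real[of "1::real" 0 "2*pi"] by simp
    next
      case False
      have "((\<lambda>t. cos (of_int (int k - int n) * t) / 2 + cos (of_int (int k + int n) * t) / 2)
            has_integral (2*pi/2 + 0/2)) {0..2*pi}"
        apply (intro has_integral_add has_integral_divide)
        using has_integral_const_real[of "1::real" 0 "2*pi"] \<open>k = n\<close> apply simp
        using cos_int_0T[of "int k + int n"] False by simp
      then show ?thesis unfolding eq using True False by simp
    qed
  next
    case False
    have "((\<lambda>t. cos (of_int (int k - int n) * t) / 2 + cos (of_int (int k + int n) * t) / 2)
            has_integral (0/2 + 0/2)) {0..2*pi}"
      apply (intro has_integral_add has_integral_divide)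
      using cos_int_0T[of "int k - int n"] False apply simp
      using cos_int_0T[of "int k + int n"] False by simp
    then show ?thesis unfolding eq using False by simp
  qed
qed

lemma Re_cispow: "Re (cis t ^ n) = cos (real n * t)"
  unfolding Complex.DeMoivre by simp

lemma bnd2: "0 \<le> (b::real) \<Longrightarrow> \<bar>x\<bar> * b * \<bar>cos p\<bar> * \<bar>cos q\<bar> \<le> \<bar>x\<bar> * b"
proof -
  assume "0 \<le> b"
  have "\<bar>cos p\<bar> * \<bar>cos q\<bar> \<le> 1" by (intro mult_le_one) auto
  then have "(\<bar>x\<bar> * b) * (\<bar>cos p\<bar> * \<bar>cos q\<bar>) \<le> (\<bar>x\<bar> * b)" using \<open>0 \<le> b\<close> by (intro mult_left_le) auto
  then show ?thesis by (simp add: mult.assoc)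
qed

locale ps =
  fixes c :: "nat \<Rightarrow> real"
  assumes conv: "\<And>z. norm z < 1 \<Longrightarrow> summable (\<lambda>n. complex_of_real (c n) * z ^ n)"
begin

abbreviation u :: "real \<Rightarrow> real \<Rightarrow> real" where
  "u r \<theta> \<equiv> psU c (complex_of_real r * cis \<theta>)"

lemma abs_summ:
  assumes "0 \<le> r" "r < 1"
  shows "summable (\<lambda>k. \<bar>c k\<bar> * r^k)"
proof -
  have "summable (\<lambda>n. complex_of_real (c n) * (complex_of_real ((1+r)/2)) ^ n)"
    using assms by (intro conv) (simp only: norm_of_real, auto)
  moreover have "norm (complex_of_real r) < norm (complex_of_real ((1+r)/2))"
    unfolding norm_of_real using assms by auto
  ultimately have "summable (\<lambda>n. norm (complex_of_real (c n) * complex_of_real r ^ n))"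
    by (rule powser_insidea)
  then show ?thesis
    by (simp add: norm_mult norm_power abs_of_nonneg assms)
qed

lemma u_series:
  assumes "0 \<le> r" "r < 1"
  shows "u r \<theta> = (\<Sum>k. c k * r^k * cos (real k * \<theta>))"
proof -
  have s: "summable (\<lambda>n. complex_of_real (c n) * (complex_of_real r * cis \<theta>) ^ n)"
    using assms by (intro conv) (auto simp: norm_mult)
  have "u r \<theta> = Re (\<Sum>n. complex_of_real (c n) * (complex_of_real r * cis \<theta>) ^ n)"
    by (simp add: psU_def psF_def)
  also have "\<dots> = (\<Sum>n. Re (complex_of_real (c n) * (complex_of_real r * cis \<theta>) ^ n))"
    using Re_suminf[OF s] by simp
  also have "\<dots> = (\<Sum>k. c k * r^k * cos (real k * \<theta>))"
    by (simp add: power_mult_distrib mult.assoc Re_cispow flip: of_real_power)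
  finally show ?thesis .
qed

lemma u_cont: assumes "0 \<le> r" "r < 1" shows "continuous_on S (u r)"
proof -
  have ul: "uniform_limit UNIV (\<lambda>N \<theta>. \<Sum>k<N. c k * r^k * cos (real k * \<theta>))
             (\<lambda>\<theta>. \<Sum>k. c k * r^k * cos (real k * \<theta>)) sequentially"
    apply (rule Weierstrass_m_test[OF _ abs_summ[OF assms]])
    using assms by (auto simp: abs_mult abs_of_nonneg intro!: mult_left_le)
  have "continuous_on UNIV (\<lambda>\<theta>. \<Sum>k. c k * r^k * cos (real k * \<theta>))"
    by (rule uniform_limit_theorem[OF _ ul]) (auto intro!: always_eventually continuous_intros)
  then show ?thesis using u_series[OF assms]
    by (metis (no_types, lifting) continuous_on_cong continuous_on_subset subset_UNIV)
qed

lemma fourier: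
  assumes "0 \<le> r" "r < 1"
  shows "((\<lambda>\<theta>. u r \<theta> * cos (real n * \<theta>)) has_integral
           (c n * r^n * (if n = 0 then 2*pi else pi))) {0..2*pi}"
proof -
  define f where "f k \<theta> = c k * r^k * cos (real k * \<theta>) * cos (real n * \<theta>)" for k \<theta>
  have ul: "uniform_limit {0..2*pi} (\<lambda>N \<theta>. \<Sum>k<N. f k \<theta>) (\<lambda>\<theta>. \<Sum>k. f k \<theta>) sequentially"
    apply (rule Weierstrass_m_test[OF _ abs_summ[OF assms]])
    using assms by (auto simp: f_def abs_mult abs_of_nonneg intro!: bnd2)
  obtain I J where I: "\<And>N. ((\<lambda>\<theta>. \<Sum>k<N. f k \<theta>) has_integral I N) {0..2*pi}"
    and J: "((\<lambda>\<theta>. \<Sum>k. f k \<theta>) has_integral J) {0..2*pi}" and IJ: "I \<longlonglongrightarrow> J"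
    by (rule uniform_limit_integral[OF ul]) (auto simp: f_def intro!: continuous_intros)
  define V where "V = c n * r^n * (if n = 0 then 2*pi else pi)"
  have IN: "I N = V" if "N > n" for N
  proof -
    have "((\<lambda>\<theta>. \<Sum>k<N. f k \<theta>) has_integral (\<Sum>k<N. c k * r^k * (if k = n then (if n = 0 then 2*pi else pi) else 0))) {0..2*pi}"
      unfolding f_def mult.assoc
      by (intro has_integral_sum finite_lessThan has_integral_mult_right cos_prod_int)
    also have "(\<Sum>k<N. c k * r^k * (if k = n then (if n = 0 then 2*pi else pi) else 0)) = V"
      using that by (simp add: V_def if_distrib[of "\<lambda>x. _ * x"] sum.delta cong: if_cong)
    finally show ?thesis using I[of N] has_integral_unique by blast
  qed
  then have "eventually (\<lambda>N. I N = V) sequentially"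
    by (rule eventually_mono[OF eventually_gt_at_top[of n]]) (simp add: IN)
  then have "I \<longlonglongrightarrow> V" by (rule tendsto_eventually)
  then have "J = V" using IJ LIMSEQ_unique by blast
  moreover have "(\<lambda>\<theta>. \<Sum>k. f k \<theta>) = (\<lambda>\<theta>. u r \<theta> * cos (real n * \<theta>))"
  proof
    fix \<theta>
    have "summable (\<lambda>k. c k * r^k * cos (real k * \<theta>))"
      by (rule summable_rabs_cancel, rule summable_comparison_test'[OF abs_summ[OF assms], of 0])
         (use assms in \<open>auto simp: abs_mult abs_of_nonneg intro!: mult_left_le\<close>)
    then show "(\<Sum>k. f k \<theta>) = u r \<theta> * cos (real n * \<theta>)"
      unfolding f_def u_series[OF assms] by (rule suminf_mult2[symmetric])
  qed
  ultimately show ?thesis using J V_def by simp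
qed

end

lemma ai_int: "(f::real\<Rightarrow>real) absolutely_integrable_on S \<Longrightarrow> f integrable_on S"
  by (rule set_lebesgue_integral_eq_integral(1))

lemma ai_abs_int: "(f::real\<Rightarrow>real) absolutely_integrable_on S \<Longrightarrow> (\<lambda>x. \<bar>f x\<bar>) integrable_on S"
  unfolding absolutely_integrable_on_def real_norm_def by (rule conjunct2)

lemma ai_mult_cont:
  fixes g h :: "real \<Rightarrow> real"
  assumes "g absolutely_integrable_on {a..b}" "continuous_on {a..b} h"
  shows "(\<lambda>x. h x * g x) absolutely_integrable_on {a..b}"
proof (rule absolutely_integrable_bounded_measurable_product_real)
  show "h \<in> borel_measurable (lebesgue_on {a..b})"
    using assms(2) by (intro continuous_imp_measurable_on_sets_lebesgue) auto
  show "bounded (h ` {a..b})"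
    using assms(2) by (intro compact_imp_bounded compact_continuous_image) auto
  show "{a..b} \<in> sets lebesgue" by simp
  show "g absolutely_integrable_on {a..b}" by (rule assms(1))
qed

lemma ai_mult_cont2:
  fixes g h :: "real \<Rightarrow> real"
  assumes "g absolutely_integrable_on {a..b}" "continuous_on {a..b} h"
  shows "(\<lambda>x. g x * h x) absolutely_integrable_on {a..b}"
proof -
  have "(\<lambda>x. g x * h x) = (\<lambda>x. h x * g x)" by (rule ext) (rule mult.commute)
  then show ?thesis using ai_mult_cont[OF assms] by simp
qed

lemma ai_const: "(\<lambda>x. k::real) absolutely_integrable_on {a..b::real}"
  by (rule absolutely_integrable_continuous_real) auto

lemma ai_cont: "continuous_on {a..b} (h::real\<Rightarrow>real) \<Longrightarrow> h absolutely_integrable_on {a..b}"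
  by (rule absolutely_integrable_continuous_real)

lemma sq_expand: "(p::real) \<noteq> 0 \<Longrightarrow> (x - y/p)^2 = x^2 - (2/p)*(x*y) + (1/p^2)*(y*y)"
  by (simp add: power2_eq_square field_simps)

lemma bessel:
  fixes h :: "real \<Rightarrow> real"
  assumes hi: "h absolutely_integrable_on {0..2*pi}" and hb: "\<And>x. \<bar>h x\<bar> \<le> B"
    and K: "finite K" "0 \<notin> K"
  defines "a \<equiv> \<lambda>n. integral {0..2*pi} (\<lambda>t. h t * cos (real n * t))"
  shows "(\<Sum>k\<in>K. (a k)^2) \<le> pi * integral {0..2*pi} (\<lambda>t. (h t)^2)"
proof -
  let ?S = "{0..2*pi}"
  have hmeas: "h \<in> borel_measurable (lebesgue_on ?S)"
    using absolutely_integrable_measurable[of "{0..2*pi}" h] hi by simp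
  have hbd: "bounded (h ` ?S)"
    unfolding bounded_iff by (rule exI[of _ B]) (use hb in auto)
  have h2: "(\<lambda>t. h t * h t) absolutely_integrable_on ?S"
    by (rule absolutely_integrable_bounded_measurable_product_real[OF hmeas _ hbd hi]) auto
  have hc: "(\<lambda>t. h t * cos (real k * t)) absolutely_integrable_on ?S" for k
    by (rule ai_mult_cont2[OF hi]) (auto intro!: continuous_intros)
  have ha: "((\<lambda>t. h t * cos (real k * t)) has_integral a k) ?S" for k
    unfolding a_def using ai_int[OF hc[of k]] by (rule integrable_integral)
  define I where "I = integral ?S (\<lambda>t. (h t)^2)"
  have i1: "((\<lambda>t. (h t)^2) has_integral I) ?S"
    using ai_int[OF h2] unfolding I_def power2_eq_square by (rule integrable_integral)
  have i2: "((\<lambda>t. \<Sum>k\<in>K. a k * (h t * cos (real k * t))) has_integral (\<Sum>k\<in>K. a k * a k)) ?S"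
    by (intro has_integral_sum K(1) has_integral_mult_right ha)
  have i3: "((\<lambda>t. \<Sum>k\<in>K. \<Sum>j\<in>K. a k * a j * (cos (real k * t) * cos (real j * t)))
              has_integral (\<Sum>k\<in>K. \<Sum>j\<in>K. a k * a j * (if k = j then (if j = 0 then 2*pi else pi) else 0))) ?S"
    by (intro has_integral_sum K(1) has_integral_mult_right cos_prod_int)
  have e3: "(\<Sum>k\<in>K. \<Sum>j\<in>K. a k * a j * (if k = j then (if j = 0 then 2*pi else pi) else 0))
        = (\<Sum>k\<in>K. a k * a k * pi)"
  proof (rule sum.cong[OF refl])
    fix k assume "k \<in> K"
    then have "k \<noteq> 0" using K(2) by (metis)
    have "(\<Sum>j\<in>K. a k * a j * (if k = j then (if j = 0 then 2*pi else pi) else 0))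
          = (\<Sum>j\<in>K. if k = j then a k * a k * pi else 0)"
      by (rule sum.cong[OF refl]) (use \<open>k \<noteq> 0\<close> in auto)
    also have "\<dots> = a k * a k * pi" using \<open>k \<in> K\<close> K(1) by simp
    finally show "(\<Sum>j\<in>K. a k * a j * (if k = j then (if j = 0 then 2*pi else pi) else 0)) = a k * a k * pi" .
  qed
  define s where "s = (\<Sum>k\<in>K. a k * a k)"
  have e3': "(\<Sum>k\<in>K. a k * a k * pi) = pi * s"
    unfolding s_def sum_distrib_left by (simp add: mult.commute)
  define P where "P t = (\<Sum>k\<in>K. a k * cos (real k * t))" for t
  have PP: "P t * P t = (\<Sum>k\<in>K. \<Sum>j\<in>K. a k * a j * (cos (real k * t) * cos (real j * t)))" for t
    unfolding P_def sum_product by (intro sum.cong refl) (simp add: mult_ac)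
  have hP: "h t * P t = (\<Sum>k\<in>K. a k * (h t * cos (real k * t)))" for t
    unfolding P_def sum_distrib_left by (intro sum.cong refl) (simp add: mult_ac)
  have pw: "(h t - P t / pi)^2 = (h t)^2 - (2/pi) * (\<Sum>k\<in>K. a k * (h t * cos (real k * t)))
            + (1/pi^2) * (\<Sum>k\<in>K. \<Sum>j\<in>K. a k * a j * (cos (real k * t) * cos (real j * t)))" for t
    unfolding sq_expand[OF pi_neq_zero] hP PP ..
  have "((\<lambda>t. (h t - P t / pi)^2) has_integral (I - (2/pi) * s + (1/pi^2) * (pi * s))) ?S"
    unfolding pw s_def
    by (intro has_integral_add has_integral_diff has_integral_mult_right i1 i2 i3[unfolded e3 e3'[unfolded s_def]])
  then have "0 \<le> I - (2/pi) * s + (1/pi^2) * (pi * s)"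
    by (rule has_integral_nonneg) auto
  moreover have "(1/pi^2) * (pi * s) = s / pi" by (simp add: power2_eq_square)
  ultimately have "0 \<le> I - s / pi" by simp
  then have "s / pi \<le> I" by simp
  then have "s \<le> pi * I" using pi_gt_zero by (simp add: divide_le_eq mult.commute)
  moreover have "(\<Sum>k\<in>K. (a k)^2) = s" unfolding s_def power2_eq_square ..
  ultimately show ?thesis unfolding I_def by simp
qed

lemma RL_bounded:
  fixes h :: "real \<Rightarrow> real"
  assumes hi: "h absolutely_integrable_on {0..2*pi}" and hb: "\<And>x. \<bar>h x\<bar> \<le> B"
  shows "(\<lambda>n. integral {0..2*pi} (\<lambda>t. h t * cos (real n * t))) \<longlonglongrightarrow> 0"
proof -
  define a where "a = (\<lambda>n. integral {0..2*pi} (\<lambda>t. h t * cos (real n * t)))"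
  define I where "I = integral {0..2*pi} (\<lambda>t. (h t)^2)"
  have "summable (\<lambda>n. (a (Suc n))^2)"
  proof (rule summableI_nonneg_bounded)
    fix n
    have "(\<Sum>k\<in>Suc ` {..<n}. (a k)^2) \<le> pi * I"
      unfolding a_def I_def by (rule bessel[OF hi hb]) auto
    then show "(\<Sum>i<n. (a (Suc i))^2) \<le> pi * I"
      by (simp add: sum.reindex)
  qed auto
  then have "(\<lambda>n. (a (Suc n))^2) \<longlonglongrightarrow> 0" by (rule summable_LIMSEQ_zero)
  then have "(\<lambda>n. sqrt ((a (Suc n))^2)) \<longlonglongrightarrow> sqrt 0" by (intro tendsto_intros)
  then have "(\<lambda>n. \<bar>a (Suc n)\<bar>) \<longlonglongrightarrow> 0" by simp
  then have "(\<lambda>n. a (Suc n)) \<longlonglongrightarrow> 0" by (simp add: tendsto_rabs_zero_iff)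
  then show ?thesis unfolding a_def by (rule LIMSEQ_imp_Suc)
qed

lemma RL:
  fixes f :: "real \<Rightarrow> real"
  assumes fi: "f absolutely_integrable_on {0..2*pi}"
  shows "(\<lambda>n. integral {0..2*pi} (\<lambda>t. f t * cos (real n * t))) \<longlonglongrightarrow> 0"
proof -
  let ?S = "{0..2*pi}"
  define t where "t k x = max (- real k) (min (real k) (f x))" for k x
  have ti: "t k absolutely_integrable_on ?S" for k
    unfolding t_def by (intro absolutely_integrable_max_1 absolutely_integrable_min_1 ai_const fi)
  have tb: "\<bar>t k x\<bar> \<le> real k" for k x by (auto simp: t_def)
  have dti: "(\<lambda>x. f x - t k x) absolutely_integrable_on ?S" for k
    using set_integral_diff(1)[OF fi ti] .
  have dc: "(\<lambda>k. integral ?S (\<lambda>x. \<bar>f x - t k x\<bar>)) \<longlonglongrightarrow> integral ?S (\<lambda>x. 0)"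
  proof (rule dominated_convergence(2)[where h = "\<lambda>x. \<bar>f x\<bar>"])
    show "(\<lambda>x. \<bar>f x - t k x\<bar>) integrable_on ?S" for k using ai_abs_int[OF dti] .
    show "(\<lambda>x. \<bar>f x\<bar>) integrable_on ?S" using ai_abs_int[OF fi] .
    show "norm \<bar>f x - t k x\<bar> \<le> \<bar>f x\<bar>" for k x by (auto simp: t_def)
    show "(\<lambda>k. \<bar>f x - t k x\<bar>) \<longlonglongrightarrow> 0" for x
    proof (rule tendsto_eventually)
      show "\<forall>\<^sub>F k in sequentially. \<bar>f x - t k x\<bar> = 0"
      proof (rule eventually_mono[OF eventually_ge_at_top[of "nat \<lceil>\<bar>f x\<bar>\<rceil>"]])
        fix k assume "nat \<lceil>\<bar>f x\<bar>\<rceil> \<le> k"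
        then have "\<bar>f x\<bar> \<le> real k" by linarith
        then show "\<bar>f x - t k x\<bar> = 0" by (auto simp: t_def)
      qed
    qed
  qed
  then have dc': "(\<lambda>k. integral ?S (\<lambda>x. \<bar>f x - t k x\<bar>)) \<longlonglongrightarrow> 0" by simp
  show ?thesis
  proof (rule LIMSEQ_I)
    fix e :: real assume "0 < e"
    then obtain k where k: "norm (integral ?S (\<lambda>x. \<bar>f x - t k x\<bar>) - 0) < e/2"
      using LIMSEQ_D[OF dc', of "e/2"] by auto
    obtain N where N: "\<And>n. n \<ge> N \<Longrightarrow> norm (integral ?S (\<lambda>x. t k x * cos (real n * x)) - 0) < e/2"
      using LIMSEQ_D[OF RL_bounded[OF ti[of k] tb], of "e/2"] \<open>0 < e\<close> by auto
    have "norm (integral ?S (\<lambda>x. f x * cos (real n * x)) - 0) < e" if "n \<ge> N" for n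
    proof -
      have i1: "(\<lambda>x. (f x - t k x) * cos (real n * x)) integrable_on ?S"
        by (rule ai_int, rule ai_mult_cont2[OF dti]) (auto intro!: continuous_intros)
      have i2: "(\<lambda>x. t k x * cos (real n * x)) integrable_on ?S"
        by (rule ai_int, rule ai_mult_cont2[OF ti]) (auto intro!: continuous_intros)
      have eq: "integral ?S (\<lambda>x. f x * cos (real n * x)) =
            integral ?S (\<lambda>x. (f x - t k x) * cos (real n * x)) + integral ?S (\<lambda>x. t k x * cos (real n * x))"
      proof -
        have "(\<lambda>x. f x * cos (real n * x)) = (\<lambda>x. (f x - t k x) * cos (real n * x) + t k x * cos (real n * x))"
          by (rule ext) (simp add: left_diff_distrib)
        then show ?thesis using integral_add[OF i1 i2] by simp
      qed
      have b1: "norm (integral ?S (\<lambda>x. (f x - t k x) * cos (real n * x))) \<le> integral ?S (\<lambda>x. \<bar>f x - t k x\<bar>)"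
        by (rule integral_norm_bound_integral[OF i1 ai_abs_int[OF dti]])
           (use mult_left_le[OF abs_cos_le_one abs_ge_zero] in \<open>simp add: abs_mult\<close>)
      have "\<bar>integral ?S (\<lambda>x. f x * cos (real n * x))\<bar> \<le>
         \<bar>integral ?S (\<lambda>x. (f x - t k x) * cos (real n * x))\<bar> + \<bar>integral ?S (\<lambda>x. t k x * cos (real n * x))\<bar>"
        unfolding eq by (rule abs_triangle_ineq)
      then show ?thesis using b1 k N[OF that] by (simp add: real_norm_def)
    qed
    then show "\<exists>no. \<forall>n\<ge>no. norm (integral ?S (\<lambda>x. f x * cos (real n * x)) - 0) < e" by blast
  qed
qed

lemma split3:
  fixes \<phi> :: "real \<Rightarrow> real"
  assumes "\<phi> integrable_on {0..T}" "0 \<le> \<eta>" "\<eta> \<le> T - \<eta>"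
  shows "integral {0..T} \<phi> = integral {0..\<eta>} \<phi> + integral {\<eta>..T-\<eta>} \<phi> + integral {T-\<eta>..T} \<phi>"
proof -
  have i1: "\<phi> integrable_on {0..T-\<eta>}" by (rule integrable_on_subinterval[OF assms(1)]) (use assms in auto)
  have "integral {0..\<eta>} \<phi> + integral {\<eta>..T-\<eta>} \<phi> = integral {0..T-\<eta>} \<phi>"
    by (rule Henstock_Kurzweil_Integration.integral_combine[OF _ _ i1]) (use assms in auto)
  moreover have "integral {0..T-\<eta>} \<phi> + integral {T-\<eta>..T} \<phi> = integral {0..T} \<phi>"
    by (rule Henstock_Kurzweil_Integration.integral_combine[OF _ _ assms(1)]) (use assms in auto)
  ultimately show ?thesis by simp
qed

lemma one_minus_cos: "0 \<le> 1 - cos (x::real) \<and> 1 - cos x \<le> x^2 / 2"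
proof -
  have e: "1 - cos x = 2 * (sin (x/2))^2"
    using cos_double_sin[of "x/2"] by simp
  have "\<bar>sin (x/2)\<bar> \<le> \<bar>x/2\<bar>" by (rule abs_sin_x_le_abs_x)
  then have "(sin (x/2))^2 \<le> (x/2)^2"
    by (metis abs_ge_zero power2_abs power_mono)
  then show ?thesis unfolding e by (simp add: power2_eq_square)
qed

lemma cosdiff_bound:
  "\<bar>cos (real n * x) - cos (real m * x)\<bar> \<le> (real n ^ 2 + real m ^ 2) / 2 * x^2"
proof -
  have "\<bar>cos (real n * x) - cos (real m * x)\<bar> \<le> (1 - cos (real n * x)) + (1 - cos (real m * x))"
    using one_minus_cos[of "real n * x"] one_minus_cos[of "real m * x"] by linarith
  also have "\<dots> \<le> (real n * x)^2/2 + (real m * x)^2/2"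
    using one_minus_cos[of "real n * x"] one_minus_cos[of "real m * x"] by linarith
  also have "\<dots> = (real n ^ 2 + real m ^ 2) / 2 * x^2" by (simp add: power_mult_distrib field_simps)
  finally show ?thesis .
qed

lemma cos_per: "cos (real n * x) = cos (real n * (x - 2*pi))"
proof -
  have "real n * (x - 2*pi) = real n * x - pi * real (2*n)" by (simp add: algebra_simps)
  moreover have "cos (pi * real (2*n)) = 1" by (simp only: cos_npi2) simp
  moreover have "sin (pi * real (2*n)) = 0" by (rule sin_npi2)
  ultimately show ?thesis by (simp only: cos_diff)
qed

lemma cosdiff_bound2:
  "\<bar>cos (real n * x) - cos (real m * x)\<bar> \<le> (real n ^ 2 + real m ^ 2) / 2 * (x - 2*pi)^2"
  using cosdiff_bound[of n "x - 2*pi" m] cos_per[of n x] cos_per[of m x] by simp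

lemma tendsto_cmp:
  fixes A B :: "real \<Rightarrow> real"
  assumes "eventually (\<lambda>r. \<bar>A r - A0\<bar> \<le> B r) F" "(B \<longlongrightarrow> 0) F"
  shows "(A \<longlongrightarrow> A0) F"
proof -
  have "((\<lambda>r. A r - A0) \<longlongrightarrow> 0) F"
    by (rule Lim_null_comparison[OF _ assms(2)]) (use assms(1) in \<open>simp add: real_norm_def\<close>)
  then show ?thesis by (rule LIM_zero_cancel)
qed

lemma lim_weight:
  fixes U :: "real \<Rightarrow> real \<Rightarrow> real" and f w :: "real \<Rightarrow> real"
  assumes lim: "((\<lambda>r. integral {a..b} (\<lambda>\<theta>. \<bar>U r \<theta> - f \<theta>\<bar>)) \<longlongrightarrow> 0) (at_left 1)"
    and fi: "f absolutely_integrable_on {a..b}"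
    and Uc: "\<And>r. 0 < r \<Longrightarrow> r < 1 \<Longrightarrow> continuous_on {a..b} (U r)"
    and wc: "continuous_on {a..b} w" and wb: "\<And>\<theta>. \<bar>w \<theta>\<bar> \<le> 1"
  shows "((\<lambda>r. integral {a..b} (\<lambda>\<theta>. U r \<theta> * w \<theta>)) \<longlongrightarrow> integral {a..b} (\<lambda>\<theta>. f \<theta> * w \<theta>)) (at_left 1)"
proof (rule tendsto_cmp[OF _ lim])
  show "\<forall>\<^sub>F r in at_left 1. \<bar>integral {a..b} (\<lambda>\<theta>. U r \<theta> * w \<theta>) - integral {a..b} (\<lambda>\<theta>. f \<theta> * w \<theta>)\<bar>
          \<le> integral {a..b} (\<lambda>\<theta>. \<bar>U r \<theta> - f \<theta>\<bar>)"
  proof (rule eventually_mono[OF eventually_at_left_real[of 0 1, OF zero_less_one]])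
    fix r :: real assume r: "r \<in> {0<..<1}"
    have Ui: "U r absolutely_integrable_on {a..b}" using Uc[of r] r by (intro ai_cont) auto
    have di: "(\<lambda>\<theta>. U r \<theta> - f \<theta>) absolutely_integrable_on {a..b}"
      using set_integral_diff(1)[OF Ui fi] .
    have i1: "(\<lambda>\<theta>. U r \<theta> * w \<theta>) integrable_on {a..b}" by (rule ai_int, rule ai_mult_cont2[OF Ui wc])
    have i2: "(\<lambda>\<theta>. f \<theta> * w \<theta>) integrable_on {a..b}" by (rule ai_int, rule ai_mult_cont2[OF fi wc])
    have i3: "(\<lambda>\<theta>. (U r \<theta> - f \<theta>) * w \<theta>) integrable_on {a..b}" by (rule ai_int, rule ai_mult_cont2[OF di wc])
    have "integral {a..b} (\<lambda>\<theta>. U r \<theta> * w \<theta>) - integral {a..b} (\<lambda>\<theta>. f \<theta> * w \<theta>)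
        = integral {a..b} (\<lambda>\<theta>. (U r \<theta> - f \<theta>) * w \<theta>)"
      by (simp add: integral_diff[OF i1 i2, symmetric] left_diff_distrib)
    also have "\<bar>\<dots>\<bar> \<le> integral {a..b} (\<lambda>\<theta>. \<bar>U r \<theta> - f \<theta>\<bar>)"
      using integral_norm_bound_integral[OF i3 ai_abs_int[OF di]]
      by (simp add: abs_mult mult_left_le[OF wb abs_ge_zero])
    finally show "\<bar>integral {a..b} (\<lambda>\<theta>. U r \<theta> * w \<theta>) - integral {a..b} (\<lambda>\<theta>. f \<theta> * w \<theta>)\<bar>
          \<le> integral {a..b} (\<lambda>\<theta>. \<bar>U r \<theta> - f \<theta>\<bar>)" .
  qed
qed

lemma lim_abs:
  fixes U :: "real \<Rightarrow> real \<Rightarrow> real" and f :: "real \<Rightarrow> real"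
  assumes lim: "((\<lambda>r. integral {a..b} (\<lambda>\<theta>. \<bar>U r \<theta> - f \<theta>\<bar>)) \<longlongrightarrow> 0) (at_left 1)"
    and fi: "f absolutely_integrable_on {a..b}"
    and Uc: "\<And>r. 0 < r \<Longrightarrow> r < 1 \<Longrightarrow> continuous_on {a..b} (U r)"
  shows "((\<lambda>r. integral {a..b} (\<lambda>\<theta>. \<bar>U r \<theta>\<bar>)) \<longlongrightarrow> integral {a..b} (\<lambda>\<theta>. \<bar>f \<theta>\<bar>)) (at_left 1)"
proof (rule tendsto_cmp[OF _ lim])
  show "\<forall>\<^sub>F r in at_left 1. \<bar>integral {a..b} (\<lambda>\<theta>. \<bar>U r \<theta>\<bar>) - integral {a..b} (\<lambda>\<theta>. \<bar>f \<theta>\<bar>)\<bar>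
          \<le> integral {a..b} (\<lambda>\<theta>. \<bar>U r \<theta> - f \<theta>\<bar>)"
  proof (rule eventually_mono[OF eventually_at_left_real[of 0 1, OF zero_less_one]])
    fix r :: real assume r: "r \<in> {0<..<1}"
    have Ui: "U r absolutely_integrable_on {a..b}" using Uc[of r] r by (intro ai_cont) auto
    have di: "(\<lambda>\<theta>. U r \<theta> - f \<theta>) absolutely_integrable_on {a..b}"
      using set_integral_diff(1)[OF Ui fi] .
    have i1: "(\<lambda>\<theta>. \<bar>U r \<theta>\<bar>) integrable_on {a..b}" by (rule ai_abs_int[OF Ui])
    have i2: "(\<lambda>\<theta>. \<bar>f \<theta>\<bar>) integrable_on {a..b}" by (rule ai_abs_int[OF fi])
    have i3: "(\<lambda>\<theta>. \<bar>U r \<theta>\<bar> - \<bar>f \<theta>\<bar>) integrable_on {a..b}" by (rule integrable_diff[OF i1 i2])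
    have "integral {a..b} (\<lambda>\<theta>. \<bar>U r \<theta>\<bar>) - integral {a..b} (\<lambda>\<theta>. \<bar>f \<theta>\<bar>)
        = integral {a..b} (\<lambda>\<theta>. \<bar>U r \<theta>\<bar> - \<bar>f \<theta>\<bar>)"
      by (simp add: integral_diff[OF i1 i2])
    also have "\<bar>\<dots>\<bar> \<le> integral {a..b} (\<lambda>\<theta>. \<bar>U r \<theta> - f \<theta>\<bar>)"
      using integral_norm_bound_integral[OF i3 ai_abs_int[OF di]]
      by (simp add: abs_triangle_ineq3)
    finally show "\<bar>integral {a..b} (\<lambda>\<theta>. \<bar>U r \<theta>\<bar>) - integral {a..b} (\<lambda>\<theta>. \<bar>f \<theta>\<bar>)\<bar>
          \<le> integral {a..b} (\<lambda>\<theta>. \<bar>U r \<theta> - f \<theta>\<bar>)" .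
  qed
qed

lemma shift_per:
  fixes v :: "real \<Rightarrow> real"
  assumes "\<And>x. v (2*pi + x) = v x"
  shows "integral {2*pi-e..2*pi} v = integral {-e..0} v"
proof -
  have "integral {-e..0} (v \<circ> (+) (2*pi)) = integral {-e+2*pi..0+2*pi} v"
    by (rule integral_shift_Icc_real)
  moreover have "v \<circ> (+) (2*pi) = v" using assms by (auto simp: fun_eq_iff)
  ultimately show ?thesis by (simp add: algebra_simps)
qed

lemma cis_per: "cis (2*pi + x) = cis x"
  by (simp add: complex_eq_iff add.commute[of "2*pi"])

locale st = ps c for c +
  fixes f :: "real \<Rightarrow> real" and \<theta>0 :: real
  assumes fint: "\<And>a b. 0 < a \<Longrightarrow> b < 2*pi \<Longrightarrow> f absolutely_integrable_on {a..b}"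
    and flim: "\<And>a b. 0 < a \<Longrightarrow> a \<le> b \<Longrightarrow> b < 2*pi \<Longrightarrow>
        ((\<lambda>r. integral {a..b} (\<lambda>\<theta>. \<bar>u r \<theta> - f \<theta>\<bar>)) \<longlongrightarrow> 0) (at_left 1)"
    and th0: "0 < \<theta>0" "\<theta>0 < pi"
begin

definition eta where "eta = \<theta>0 / 2"

lemma eta: "0 < eta" "eta < \<theta>0" "eta \<le> 2*pi - eta" "2*pi - eta < 2*pi" "eta < pi"
  using th0 by (auto simp: eta_def)

lemma ucont: "0 \<le> r \<Longrightarrow> r < 1 \<Longrightarrow> continuous_on S (u r)"
  by (rule u_cont)

lemma uabs_int: "0 \<le> r \<Longrightarrow> r < 1 \<Longrightarrow> (\<lambda>\<theta>. \<bar>u r \<theta>\<bar>) integrable_on {a..b}"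
  by (intro integrable_continuous_real continuous_on_rabs ucont)

lemma u_int: "0 \<le> r \<Longrightarrow> r < 1 \<Longrightarrow> (u r) integrable_on {a..b}"
  by (intro integrable_continuous_real ucont)

lemma u_ai: "0 \<le> r \<Longrightarrow> r < 1 \<Longrightarrow> (u r) absolutely_integrable_on {a..b}"
  by (intro ai_cont ucont)

lemma uper: "u r (2*pi + x) = u r x"
  by (simp add: cis_per)

lemma far_lim_w:
  assumes "continuous_on {eta..2*pi-eta} w" "\<And>\<theta>. \<bar>w \<theta>\<bar> \<le> 1"
  shows "((\<lambda>r. integral {eta..2*pi-eta} (\<lambda>\<theta>. u r \<theta> * w \<theta>)) \<longlongrightarrow> integral {eta..2*pi-eta} (\<lambda>\<theta>. f \<theta> * w \<theta>)) (at_left 1)"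
  by (rule lim_weight[OF flim fint _ assms]) (use eta in \<open>auto intro: ucont\<close>)

lemma far_lim: "((\<lambda>r. integral {eta..2*pi-eta} (u r)) \<longlongrightarrow> integral {eta..2*pi-eta} f) (at_left 1)"
  using far_lim_w[of "\<lambda>_. 1"] by simp

lemma far_lim_abs: "((\<lambda>r. integral {eta..2*pi-eta} (\<lambda>\<theta>. \<bar>u r \<theta>\<bar>)) \<longlongrightarrow> integral {eta..2*pi-eta} (\<lambda>\<theta>. \<bar>f \<theta>\<bar>)) (at_left 1)"
  by (rule lim_abs[OF flim fint]) (use eta in \<open>auto intro: ucont\<close>)

lemma near_split:
  fixes v :: "real \<Rightarrow> real"
  assumes "v integrable_on {-eta..2*pi}" "\<And>x. v (2*pi + x) = v x"
  shows "integral {0..2*pi} v = integral {-eta..eta} v + integral {eta..2*pi-eta} v"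
proof -
  have "integral {0..2*pi} v = integral {0..eta} v + integral {eta..2*pi-eta} v + integral {2*pi-eta..2*pi} v"
    by (rule split3) (use eta in \<open>auto intro: integrable_on_subinterval[OF assms(1)]\<close>)
  moreover have "integral {2*pi-eta..2*pi} v = integral {-eta..0} v" by (rule shift_per[of v, OF assms(2)])
  moreover have "integral {-eta..0} v + integral {0..eta} v = integral {-eta..eta} v"
    by (rule Henstock_Kurzweil_Integration.integral_combine) (use eta in \<open>auto intro: integrable_on_subinterval[OF assms(1)]\<close>)
  ultimately show ?thesis by simp
qed

lemma int_u0: "0 \<le> r \<Longrightarrow> r < 1 \<Longrightarrow> integral {0..2*pi} (u r) = 2 * pi * c 0"
  using fourier[of r 0] by (simp add: integral_unique)

end

lemma ai_abs: "(f::real\<Rightarrow>real) absolutely_integrable_on S \<Longrightarrow> (\<lambda>x. \<bar>f x\<bar>) absolutely_integrable_on S"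
  using absolutely_integrable_norm[where f=f and S=S] by (simp add: o_def real_norm_def)

context st begin

lemma near_bound_g:
  fixes g :: "real \<Rightarrow> real"
  assumes gi: "g absolutely_integrable_on {-\<theta>0..\<theta>0}"
    and ae: "AE \<theta> in lebesgue. \<theta> \<in> {-\<theta>0<..<\<theta>0} \<longrightarrow> (\<forall>r\<in>{0..<1}. g \<theta> \<le> u r \<theta>)"
  shows "\<exists>Mn. eventually (\<lambda>r. integral {-eta..eta} (\<lambda>\<theta>. \<bar>u r \<theta>\<bar>) \<le> Mn) (at_left 1)"
proof -
  obtain N where N: "\<And>x. x \<in> space lebesgue - N \<Longrightarrow> x \<in> {-\<theta>0<..<\<theta>0} \<longrightarrow> (\<forall>r\<in>{0..<1}. g x \<le> u r x)"
    and Nn: "N \<in> null_sets lebesgue"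
    using AE_E3[OF ae] by blast
  have negN: "negligible N" using Nn negligible_iff_null_sets by blast
  have gi': "g absolutely_integrable_on {-eta..eta}"
    by (rule set_integrable_subset[OF gi]) (use eta in auto)
  define G where "G = integral {-eta..eta} (\<lambda>\<theta>. \<bar>g \<theta>\<bar>)"
  define Far where "Far = integral {eta..2*pi-eta} f"
  have ev1: "eventually (\<lambda>r. integral {eta..2*pi-eta} (u r) > Far - 1) (at_left 1)"
    using far_lim unfolding Far_def by (rule order_tendstoD) simp
  have "eventually (\<lambda>r. integral {-eta..eta} (\<lambda>\<theta>. \<bar>u r \<theta>\<bar>) \<le> 2*pi*c 0 - (Far - 1) + 2 * G) (at_left 1)"
    using ev1 eventually_at_left_real[of 0 1, OF zero_less_one]
  proof eventually_elim
    case (elim r)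
    then have r: "0 < r" "r < 1" by auto
    have I: "integral {-eta..eta} (u r) = 2*pi*c 0 - integral {eta..2*pi-eta} (u r)"
      using near_split[of "u r"] int_u0[of r] r uper u_int[of r] by simp
    define \<phi> where "\<phi> \<theta> = max \<bar>u r \<theta>\<bar> (u r \<theta> + 2 * \<bar>g \<theta>\<bar>)" for \<theta>
    have ua: "u r absolutely_integrable_on {-eta..eta}" using u_ai r by simp
    have h2: "(\<lambda>\<theta>. u r \<theta> + 2 * \<bar>g \<theta>\<bar>) absolutely_integrable_on {-eta..eta}"
      by (intro set_integral_add(1) ua set_integrable_mult_right ai_abs gi')
    have h2i: "(\<lambda>\<theta>. u r \<theta> + 2 * \<bar>g \<theta>\<bar>) integrable_on {-eta..eta}" by (rule ai_int[OF h2])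
    have \<phi>i: "\<phi> integrable_on {-eta..eta}"
      unfolding \<phi>_def by (rule ai_int, intro absolutely_integrable_max_1 h2 ai_abs ua)
    have "integral {-eta..eta} (\<lambda>\<theta>. \<bar>u r \<theta>\<bar>) \<le> integral {-eta..eta} \<phi>"
      by (rule integral_le[OF uabs_int \<phi>i]) (use r in \<open>auto simp: \<phi>_def\<close>)
    also have "integral {-eta..eta} \<phi> = integral {-eta..eta} (\<lambda>\<theta>. u r \<theta> + 2 * \<bar>g \<theta>\<bar>)"
    proof (rule integral_spike[OF negN])
      fix x assume x: "x \<in> {-eta..eta} - N"
      then have "x \<in> {-\<theta>0<..<\<theta>0}" using eta by auto
      then have "g x \<le> u r x" using N[of x] x r by auto
      then show "u r x + 2 * \<bar>g x\<bar> = \<phi> x" unfolding \<phi>_def by auto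
    qed
    also have "\<dots> = integral {-eta..eta} (u r) + 2 * G"
      unfolding G_def using u_int[of r] r ai_int[OF ai_abs[OF gi']]
      by (simp add: integral_add integral_mult_right)
    finally show ?case using I elim by simp
  qed
  then show ?thesis by blast
qed

lemma near_bound_b2:
  assumes "\<forall>r\<in>{0<..<1}. integral {-\<theta>0..\<theta>0} (\<lambda>\<theta>. \<bar>u r \<theta>\<bar>) \<le> M"
  shows "\<exists>Mn. eventually (\<lambda>r. integral {-eta..eta} (\<lambda>\<theta>. \<bar>u r \<theta>\<bar>) \<le> Mn) (at_left 1)"
proof -
  have "eventually (\<lambda>r. integral {-eta..eta} (\<lambda>\<theta>. \<bar>u r \<theta>\<bar>) \<le> M) (at_left 1)"
    using eventually_at_left_real[of 0 1, OF zero_less_one]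
  proof eventually_elim
    case (elim r)
    then have r: "0 < r" "r < 1" by auto
    have "integral {-eta..eta} (\<lambda>\<theta>. \<bar>u r \<theta>\<bar>) \<le> integral {-\<theta>0..\<theta>0} (\<lambda>\<theta>. \<bar>u r \<theta>\<bar>)"
      by (rule integral_subset_le) (use r eta in \<open>auto intro: uabs_int\<close>)
    then show ?case using assms r by force
  qed
  then show ?thesis by blast
qed

end

lemma mono_ext:
  fixes P :: "real \<Rightarrow> real"
  assumes P0: "\<And>x. 0 \<le> P x"
    and Pi: "\<And>a b. 0 < a \<Longrightarrow> b < 2*pi \<Longrightarrow> P integrable_on {a..b}"
    and PM: "\<And>a b. 0 < a \<Longrightarrow> a \<le> b \<Longrightarrow> b < 2*pi \<Longrightarrow> integral {a..b} P \<le> M"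
  shows "P integrable_on {0..2*pi}"
proof -
  define a where "a k = pi / (real k + 2)" for k :: nat
  have a0: "0 < a k" for k unfolding a_def by simp
  have ale: "a k \<le> pi/2" for k unfolding a_def by (intro divide_left_mono) auto
  have amono: "a (Suc k) \<le> a k" for k unfolding a_def by (simp add: frac_le)
  define h where "h k x = (if x \<in> {a k..2*pi - a k} then P x else 0)" for k x
  define g where "g x = (if x \<in> {0<..<2*pi} then P x else 0)" for x
  have hi: "h k integrable_on {0..2*pi}" for k
  proof -
    have "P integrable_on ({a k..2*pi - a k} \<inter> {0..2*pi})"
    proof -
      have "{a k..2*pi - a k} \<inter> {0..2*pi} = {a k..2*pi - a k}" using a0[of k] by auto
      then show ?thesis using Pi[of "a k" "2*pi - a k"] a0[of k] by simp
    qed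
    then show ?thesis unfolding h_def by (subst integrable_restrict_Int)
  qed
  have hint: "integral {0..2*pi} (h k) = integral {a k..2*pi - a k} P" for k
  proof -
    have m: "max (a k) 0 = a k" "min (2*pi - a k) (2*pi) = 2*pi - a k" using a0[of k] by auto
    then show ?thesis unfolding h_def using Henstock_Kurzweil_Integration.integral_restrict_Int[of "{0..2*pi}" "{a k..2*pi - a k}" P] m by simp
  qed
  have "g integrable_on {0..2*pi} \<and> ((\<lambda>k. integral {0..2*pi} (h k)) \<longlonglongrightarrow> integral {0..2*pi} g)"
  proof (rule monotone_convergence_increasing[OF hi])
    show "h k x \<le> h (Suc k) x" if "x \<in> {0..2*pi}" for k x
      using amono[of k] P0[of x] by (auto simp: h_def)
    show "(\<lambda>k. h k x) \<longlonglongrightarrow> g x" if "x \<in> {0..2*pi}" for x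
    proof (cases "x \<in> {0<..<2*pi}")
      case True
      then have x: "0 < x" "x < 2*pi" by auto
      define mm where "mm = min x (2*pi - x)"
      have mpos: "0 < mm" using x by (simp add: mm_def)
      have mle: "mm \<le> x" "mm \<le> 2*pi - x" by (auto simp: mm_def)
      obtain N :: nat where N: "pi / mm < real N" using reals_Archimedean2 by blast
      have "eventually (\<lambda>k. h k x = g x) sequentially"
      proof (rule eventually_mono[OF eventually_ge_at_top[of N]])
        fix k assume "N \<le> k"
        have "pi / mm < real k + 2" using N \<open>N \<le> k\<close> by linarith
        then have "pi < (real k + 2) * mm" using mpos by (simp add: pos_divide_less_eq mult.commute)
        then have "a k < mm" unfolding a_def
          by (subst pos_divide_less_eq) (auto simp: mult.commute)
        then have "a k < x" "a k < 2*pi - x" using mle by auto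
        then show "h k x = g x" using True by (auto simp: h_def g_def)
      qed
      then show ?thesis by (rule tendsto_eventually)
    next
      case False
      then have "h k x = 0" "g x = 0" for k using a0[of k] that by (auto simp: h_def g_def)
      then show ?thesis by simp
    qed
    show "bounded (range (\<lambda>k. integral {0..2*pi} (h k)))"
    proof -
      have "\<bar>integral {0..2*pi} (h k)\<bar> \<le> M" for k
      proof -
        have "0 \<le> integral {a k..2*pi - a k} P"
          using Pi[of "a k" "2*pi - a k"] a0[of k] P0 by (intro integral_nonneg) auto
        moreover have "integral {a k..2*pi - a k} P \<le> M"
          using PM[of "a k" "2*pi - a k"] a0[of k] ale[of k] by simp
        ultimately show ?thesis using hint[of k] by simp
      qed
      then show ?thesis unfolding bounded_iff by (intro exI[of _ M]) (auto simp: real_norm_def)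
    qed
  qed
  then have gi: "g integrable_on {0..2*pi}" by blast
  show ?thesis
    by (rule integrable_spike_finite[where S="{0,2*pi}" and f=g and g=P, OF _ _ gi]) (auto simp: g_def)
qed

locale st2 = st +
  assumes near: "\<exists>Mn. eventually (\<lambda>r. integral {-eta..eta} (\<lambda>\<theta>. \<bar>u r \<theta>\<bar>) \<le> Mn) (at_left 1)"
begin

lemma total_bound: "\<exists>M. eventually (\<lambda>r. integral {0..2*pi} (\<lambda>\<theta>. \<bar>u r \<theta>\<bar>) \<le> M) (at_left 1)"
proof -
  obtain Mn where ev0: "eventually (\<lambda>r. integral {-eta..eta} (\<lambda>\<theta>. \<bar>u r \<theta>\<bar>) \<le> Mn) (at_left 1)"
    using near by blast
  define Ff where "Ff = integral {eta..2*pi-eta} (\<lambda>\<theta>. \<bar>f \<theta>\<bar>)"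
  have ev1: "eventually (\<lambda>r. integral {eta..2*pi-eta} (\<lambda>\<theta>. \<bar>u r \<theta>\<bar>) < Ff + 1) (at_left 1)"
    using far_lim_abs unfolding Ff_def by (rule order_tendstoD) simp
  have "eventually (\<lambda>r. integral {0..2*pi} (\<lambda>\<theta>. \<bar>u r \<theta>\<bar>) \<le> Mn + (Ff + 1)) (at_left 1)"
    using ev0 ev1 eventually_at_left_real[of 0 1, OF zero_less_one]
  proof eventually_elim
    case (elim r)
    then have r: "0 < r" "r < 1" by auto
    have "integral {0..2*pi} (\<lambda>\<theta>. \<bar>u r \<theta>\<bar>) = integral {-eta..eta} (\<lambda>\<theta>. \<bar>u r \<theta>\<bar>) + integral {eta..2*pi-eta} (\<lambda>\<theta>. \<bar>u r \<theta>\<bar>)"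
      by (rule near_split) (use r uabs_int uper in auto)
    then show ?case using elim by simp
  qed
  then show ?thesis by blast
qed

lemma f_ai: "f absolutely_integrable_on {0..2*pi}"
proof -
  obtain M where evM: "eventually (\<lambda>r. integral {0..2*pi} (\<lambda>\<theta>. \<bar>u r \<theta>\<bar>) \<le> M) (at_left 1)"
    using total_bound by blast
  have fM: "integral {a..b} (\<lambda>\<theta>. \<bar>f \<theta>\<bar>) \<le> M" if ab: "0 < a" "a \<le> b" "b < 2*pi" for a b
  proof -
    have l: "((\<lambda>r. integral {a..b} (\<lambda>\<theta>. \<bar>u r \<theta>\<bar>)) \<longlongrightarrow> integral {a..b} (\<lambda>\<theta>. \<bar>f \<theta>\<bar>)) (at_left 1)"
      by (rule lim_abs[OF flim fint]) (use ab in \<open>auto intro: ucont\<close>)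
    have "eventually (\<lambda>r. integral {a..b} (\<lambda>\<theta>. \<bar>u r \<theta>\<bar>) \<le> M) (at_left 1)"
      using evM eventually_at_left_real[of 0 1, OF zero_less_one]
    proof eventually_elim
      case (elim r)
      then have r: "0 < r" "r < 1" by auto
      have "integral {a..b} (\<lambda>\<theta>. \<bar>u r \<theta>\<bar>) \<le> integral {0..2*pi} (\<lambda>\<theta>. \<bar>u r \<theta>\<bar>)"
        by (rule integral_subset_le) (use r ab in \<open>auto intro: uabs_int\<close>)
      then show ?case using elim by simp
    qed
    then show ?thesis
      using tendsto_le[OF _ tendsto_const l, of M] by simp
  qed
  define P1 where "P1 x = max 0 (f x)" for x
  define P2 where "P2 x = max 0 (f x) - f x" for x
  have Pai: "P1 absolutely_integrable_on {a..b}" "P2 absolutely_integrable_on {a..b}"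
    if "0 < a" "b < 2*pi" for a b
  proof -
    show "P1 absolutely_integrable_on {a..b}" unfolding P1_def
      by (intro absolutely_integrable_max_1 ai_const fint that)
    then show "P2 absolutely_integrable_on {a..b}" unfolding P2_def P1_def
      by (intro set_integral_diff(1) fint that)
  qed
  have Pb: "P1 x \<le> \<bar>f x\<bar>" "P2 x \<le> \<bar>f x\<bar>" "0 \<le> P1 x" "0 \<le> P2 x" for x
    by (auto simp: P1_def P2_def)
  have P1i: "P1 integrable_on {0..2*pi}"
  proof (rule mono_ext[where M=M])
    show "P1 integrable_on {a..b}" if "0 < a" "b < 2*pi" for a b using ai_int[OF Pai(1)[OF that]] .
    show "integral {a..b} P1 \<le> M" if "0 < a" "a \<le> b" "b < 2*pi" for a b
      using integral_le[OF ai_int[OF Pai(1)] ai_abs_int[OF fint], of a b] fM[OF that] that Pb by force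
  qed (rule Pb)
  have P2i: "P2 integrable_on {0..2*pi}"
  proof (rule mono_ext[where M=M])
    show "P2 integrable_on {a..b}" if "0 < a" "b < 2*pi" for a b using ai_int[OF Pai(2)[OF that]] .
    show "integral {a..b} P2 \<le> M" if "0 < a" "a \<le> b" "b < 2*pi" for a b
      using integral_le[OF ai_int[OF Pai(2)] ai_abs_int[OF fint], of a b] fM[OF that] that Pb by force
  qed (rule Pb)
  have "(\<lambda>x. P1 x - P2 x) integrable_on {0..2*pi}" by (rule integrable_diff[OF P1i P2i])
  moreover have "(\<lambda>x. P1 x - P2 x) = f" by (auto simp: P1_def P2_def)
  ultimately have fi: "f integrable_on {0..2*pi}" by simp
  have "(\<lambda>x. P1 x + P2 x) integrable_on {0..2*pi}" by (rule integrable_add[OF P1i P2i])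
  moreover have "(\<lambda>x. P1 x + P2 x) = (\<lambda>x. norm (f x))" by (auto simp: P1_def P2_def real_norm_def)
  ultimately have "(\<lambda>x. norm (f x)) integrable_on {0..2*pi}" by simp
  then show ?thesis using fi unfolding absolutely_integrable_on_def by simp
qed

end

lemma piece:
  fixes \<phi> D :: "real \<Rightarrow> real"
  assumes phi: "\<phi> absolutely_integrable_on {a..b}" and Dc: "continuous_on {a..b} D"
    and DB: "\<And>\<theta>. \<theta> \<in> {a..b} \<Longrightarrow> \<bar>D \<theta>\<bar> \<le> B"
  shows "\<bar>integral {a..b} (\<lambda>\<theta>. \<phi> \<theta> * D \<theta>)\<bar> \<le> B * integral {a..b} (\<lambda>\<theta>. \<bar>\<phi> \<theta>\<bar>)"
proof -
  have i1: "(\<lambda>\<theta>. \<phi> \<theta> * D \<theta>) integrable_on {a..b}" by (rule ai_int, rule ai_mult_cont2[OF phi Dc])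
  have i2: "(\<lambda>\<theta>. B * \<bar>\<phi> \<theta>\<bar>) integrable_on {a..b}" using integrable_on_cmult_left[OF ai_abs_int[OF phi], of B] by simp
  have "\<bar>integral {a..b} (\<lambda>\<theta>. \<phi> \<theta> * D \<theta>)\<bar> \<le> integral {a..b} (\<lambda>\<theta>. B * \<bar>\<phi> \<theta>\<bar>)"
  proof -
    have "norm (integral {a..b} (\<lambda>\<theta>. \<phi> \<theta> * D \<theta>)) \<le> integral {a..b} (\<lambda>\<theta>. B * \<bar>\<phi> \<theta>\<bar>)"
    proof (rule integral_norm_bound_integral[OF i1 i2])
      fix x assume x: "x \<in> {a..b}"
      have "\<bar>\<phi> x\<bar> * \<bar>D x\<bar> \<le> \<bar>\<phi> x\<bar> * B" by (rule mult_left_mono[OF DB[OF x]]) simp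
      then show "norm (\<phi> x * D x) \<le> B * \<bar>\<phi> x\<bar>" by (simp add: abs_mult mult.commute)
    qed
    then show ?thesis by simp
  qed
  also have "\<dots> = B * integral {a..b} (\<lambda>\<theta>. \<bar>\<phi> \<theta>\<bar>)" by simp
  finally show ?thesis .
qed

context st2 begin

definition fh where "fh n = integral {0..2*pi} (\<lambda>\<theta>. f \<theta> * cos (real n * \<theta>))"

lemma fh_has: "((\<lambda>\<theta>. f \<theta> * cos (real n * \<theta>)) has_integral fh n) {0..2*pi}"
  unfolding fh_def by (rule integrable_integral, rule ai_int, rule ai_mult_cont2[OF f_ai]) (auto intro!: continuous_intros)

lemma Er_eq:
  assumes r: "0 \<le> r" "r < 1" and nm: "1 \<le> n" "1 \<le> m"
  shows "((\<lambda>\<theta>. (u r \<theta> - f \<theta>) * (cos (real n * \<theta>) - cos (real m * \<theta>))) has_integral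
           (pi * (c n * r^n - c m * r^m) - (fh n - fh m))) {0..2*pi}"
proof -
  have "((\<lambda>\<theta>. (u r \<theta> * cos (real n * \<theta>) - u r \<theta> * cos (real m * \<theta>)) - (f \<theta> * cos (real n * \<theta>) - f \<theta> * cos (real m * \<theta>)))
     has_integral ((c n * r^n * pi - c m * r^m * pi) - (fh n - fh m))) {0..2*pi}"
    using fourier[OF r, of n] fourier[OF r, of m] nm
    by (intro has_integral_diff fh_has) auto
  moreover have "(\<lambda>\<theta>. (u r \<theta> * cos (real n * \<theta>) - u r \<theta> * cos (real m * \<theta>)) - (f \<theta> * cos (real n * \<theta>) - f \<theta> * cos (real m * \<theta>)))
      = (\<lambda>\<theta>. (u r \<theta> - f \<theta>) * (cos (real n * \<theta>) - cos (real m * \<theta>)))"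
    by (rule ext) (simp add: algebra_simps)
  moreover have "(c n * r^n * pi - c m * r^m * pi) - (fh n - fh m) = pi * (c n * r^n - c m * r^m) - (fh n - fh m)"
    by (simp add: algebra_simps)
  ultimately show ?thesis by simp
qed


lemma key_est:
  assumes nm: "1 \<le> n" "1 \<le> m" and e: "0 < e" "e \<le> eta"
    and M: "eventually (\<lambda>r. integral {0..2*pi} (\<lambda>\<theta>. \<bar>u r \<theta>\<bar>) \<le> M) (at_left 1)"
  shows "\<bar>pi * (c n - c m) - (fh n - fh m)\<bar> \<le>
     (real n ^ 2 + real m ^ 2) / 2 * e^2 * (M + integral {0..2*pi} (\<lambda>\<theta>. \<bar>f \<theta>\<bar>))"
proof -
  define K where "K = (real n ^ 2 + real m ^ 2) / 2"
  define F1 where "F1 = integral {0..2*pi} (\<lambda>\<theta>. \<bar>f \<theta>\<bar>)"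
  define D where "D \<theta> = cos (real n * \<theta>) - cos (real m * \<theta>)" for \<theta>
  have K0: "0 \<le> K" unfolding K_def by simp
  have Dc: "continuous_on S D" for S unfolding D_def by (intro continuous_intros)
  have ee: "e \<le> 2*pi - e" "0 \<le> e" using e eta by auto
  define Er where "Er r = pi * (c n * r^n - c m * r^m) - (fh n - fh m)" for r
  define Mid where "Mid r = integral {e..2*pi-e} (\<lambda>\<theta>. \<bar>u r \<theta> - f \<theta>\<bar>)" for r
  have lim1: "((\<lambda>r. \<bar>Er r\<bar>) \<longlongrightarrow> \<bar>pi * (c n - c m) - (fh n - fh m)\<bar>) (at_left 1)"
  proof -
    have "((\<lambda>r. \<bar>Er r\<bar>) \<longlongrightarrow> \<bar>pi * (c n * 1^n - c m * 1^m) - (fh n - fh m)\<bar>) (at_left 1)"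
      unfolding Er_def by (intro tendsto_intros)
    then show ?thesis by simp
  qed
  have lim2: "((\<lambda>r. K * e^2 * (M + F1) + 2 * Mid r) \<longlongrightarrow> K * e^2 * (M + F1) + 2 * 0) (at_left 1)"
    unfolding Mid_def using ee e eta by (intro tendsto_intros flim) auto
  have ev: "eventually (\<lambda>r. \<bar>Er r\<bar> \<le> K * e^2 * (M + F1) + 2 * Mid r) (at_left 1)"
    using M eventually_at_left_real[of 0 1, OF zero_less_one]
  proof eventually_elim
    case (elim r)
    then have r: "0 \<le> r" "r < 1" and uM: "integral {0..2*pi} (\<lambda>\<theta>. \<bar>u r \<theta>\<bar>) \<le> M" by auto
    define \<phi> where "\<phi> \<theta> = u r \<theta> - f \<theta>" for \<theta>
    have phi: "\<phi> absolutely_integrable_on {0..2*pi}"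
      unfolding \<phi>_def by (intro set_integral_diff(1) u_ai r f_ai)
    have phis: "\<phi> absolutely_integrable_on {a..b}" if "0 \<le> a" "b \<le> 2*pi" for a b
      by (rule set_integrable_subset[OF phi]) (use that in auto)
    have psi: "(\<lambda>\<theta>. \<phi> \<theta> * D \<theta>) integrable_on {0..2*pi}"
      by (rule ai_int, rule ai_mult_cont2[OF phi Dc])
    have Er: "integral {0..2*pi} (\<lambda>\<theta>. \<phi> \<theta> * D \<theta>) = Er r"
      using Er_eq[OF r nm] unfolding \<phi>_def D_def Er_def by (rule integral_unique)
    have sp: "integral {0..2*pi} (\<lambda>\<theta>. \<phi> \<theta> * D \<theta>) =
        integral {0..e} (\<lambda>\<theta>. \<phi> \<theta> * D \<theta>) + integral {e..2*pi-e} (\<lambda>\<theta>. \<phi> \<theta> * D \<theta>)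
        + integral {2*pi-e..2*pi} (\<lambda>\<theta>. \<phi> \<theta> * D \<theta>)"
      by (rule split3[OF psi ee(2) ee(1)])
    have b0: "\<bar>integral {0..e} (\<lambda>\<theta>. \<phi> \<theta> * D \<theta>)\<bar> \<le> (K * e^2) * integral {0..e} (\<lambda>\<theta>. \<bar>\<phi> \<theta>\<bar>)"
    proof (rule piece[OF phis Dc])
      fix \<theta> assume th: "\<theta> \<in> {0..e}"
      have "\<bar>D \<theta>\<bar> \<le> K * \<theta>^2" unfolding D_def K_def by (rule cosdiff_bound)
      also have "\<dots> \<le> K * e^2" using th K0 by (intro mult_left_mono power_mono) auto
      finally show "\<bar>D \<theta>\<bar> \<le> K * e^2" .
    qed (use ee in auto)
    have bT: "\<bar>integral {2*pi-e..2*pi} (\<lambda>\<theta>. \<phi> \<theta> * D \<theta>)\<bar> \<le> (K * e^2) * integral {2*pi-e..2*pi} (\<lambda>\<theta>. \<bar>\<phi> \<theta>\<bar>)"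
    proof (rule piece[OF phis Dc])
      fix \<theta> assume th: "\<theta> \<in> {2*pi-e..2*pi}"
      have "\<bar>D \<theta>\<bar> \<le> K * (\<theta> - 2*pi)^2" unfolding D_def K_def by (rule cosdiff_bound2)
      also have "(\<theta> - 2*pi)^2 = (2*pi - \<theta>)^2" by (simp add: power2_commute)
      also have "K * (2*pi - \<theta>)^2 \<le> K * e^2" using th K0 by (intro mult_left_mono power_mono) auto
      finally show "\<bar>D \<theta>\<bar> \<le> K * e^2" .
    qed (use ee in auto)
    have bm: "\<bar>integral {e..2*pi-e} (\<lambda>\<theta>. \<phi> \<theta> * D \<theta>)\<bar> \<le> 2 * integral {e..2*pi-e} (\<lambda>\<theta>. \<bar>\<phi> \<theta>\<bar>)"
    proof (rule piece[OF phis Dc])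
      fix \<theta> show "\<bar>D \<theta>\<bar> \<le> 2" unfolding D_def
        using abs_cos_le_one[of "real n * \<theta>"] abs_cos_le_one[of "real m * \<theta>"] by linarith
    qed (use ee in auto)
    have aphi: "(\<lambda>\<theta>. \<bar>\<phi> \<theta>\<bar>) integrable_on {0..2*pi}" by (rule ai_abs_int[OF phi])
    have sp2: "integral {0..2*pi} (\<lambda>\<theta>. \<bar>\<phi> \<theta>\<bar>) =
        integral {0..e} (\<lambda>\<theta>. \<bar>\<phi> \<theta>\<bar>) + integral {e..2*pi-e} (\<lambda>\<theta>. \<bar>\<phi> \<theta>\<bar>)
        + integral {2*pi-e..2*pi} (\<lambda>\<theta>. \<bar>\<phi> \<theta>\<bar>)"
      by (rule split3[OF aphi ee(2) ee(1)])
    have midnn: "0 \<le> integral {e..2*pi-e} (\<lambda>\<theta>. \<bar>\<phi> \<theta>\<bar>)"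
      by (rule integral_nonneg) (use ai_abs_int[OF phis] ee in auto)
    have phiQ: "integral {0..2*pi} (\<lambda>\<theta>. \<bar>\<phi> \<theta>\<bar>) \<le> M + F1"
    proof -
      have "integral {0..2*pi} (\<lambda>\<theta>. \<bar>\<phi> \<theta>\<bar>) \<le> integral {0..2*pi} (\<lambda>\<theta>. \<bar>u r \<theta>\<bar> + \<bar>f \<theta>\<bar>)"
        by (rule integral_le[OF aphi integrable_add[OF uabs_int[OF r] ai_abs_int[OF f_ai]]])
           (auto simp: \<phi>_def)
      also have "\<dots> = integral {0..2*pi} (\<lambda>\<theta>. \<bar>u r \<theta>\<bar>) + F1"
        unfolding F1_def by (rule integral_add[OF uabs_int[OF r] ai_abs_int[OF f_ai]])
      finally show ?thesis using uM by simp
    qed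
    have "\<bar>Er r\<bar> \<le> \<bar>integral {0..e} (\<lambda>\<theta>. \<phi> \<theta> * D \<theta>)\<bar> + \<bar>integral {e..2*pi-e} (\<lambda>\<theta>. \<phi> \<theta> * D \<theta>)\<bar>
        + \<bar>integral {2*pi-e..2*pi} (\<lambda>\<theta>. \<phi> \<theta> * D \<theta>)\<bar>"
      unfolding Er[symmetric] sp by linarith
    also have "\<dots> \<le> (K * e^2) * (integral {0..e} (\<lambda>\<theta>. \<bar>\<phi> \<theta>\<bar>) + integral {2*pi-e..2*pi} (\<lambda>\<theta>. \<bar>\<phi> \<theta>\<bar>))
        + 2 * integral {e..2*pi-e} (\<lambda>\<theta>. \<bar>\<phi> \<theta>\<bar>)"
      using b0 bT bm by (simp add: distrib_left)
    also have "(K * e^2) * (integral {0..e} (\<lambda>\<theta>. \<bar>\<phi> \<theta>\<bar>) + integral {2*pi-e..2*pi} (\<lambda>\<theta>. \<bar>\<phi> \<theta>\<bar>))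
        \<le> (K * e^2) * (M + F1)"
      using sp2 midnn phiQ K0 by (intro mult_left_mono) auto
    finally show ?case unfolding Mid_def \<phi>_def by simp
  qed
  have "\<bar>pi * (c n - c m) - (fh n - fh m)\<bar> \<le> K * e^2 * (M + F1) + 2 * 0"
    by (rule tendsto_le[OF _ lim2 lim1 ev]) simp
  then show ?thesis unfolding K_def F1_def by simp
qed

end

lemma abel0:
  fixes e :: "nat \<Rightarrow> real"
  assumes e0: "e \<longlonglongrightarrow> 0"
  shows "((\<lambda>r. (1-r) * (\<Sum>k. e k * r^k)) \<longlongrightarrow> 0) (at_left 1)"
proof (rule tendstoI)
  fix \<epsilon> :: real assume \<epsilon>: "0 < \<epsilon>"
  obtain B where B0: "0 < B" and Ball: "\<forall>k. norm (e k) \<le> B"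
    by (rule BseqE[OF convergent_imp_Bseq[OF convergentI[OF e0]]])
  have B: "norm (e k) \<le> B" for k using Ball by blast
  obtain N where N: "\<And>k. k \<ge> N \<Longrightarrow> norm (e k - 0) < \<epsilon>/2"
    using LIMSEQ_D[OF e0, of "\<epsilon>/2"] \<epsilon> by auto
  define \<delta> where "\<delta> = \<epsilon> / (2 * (real N * B + 1))"
  have NB0: "0 \<le> real N * B" using B0 by simp
  have \<delta>0: "0 < \<delta>" unfolding \<delta>_def using \<epsilon> NB0 by simp
  have \<delta>NB: "\<delta> * (real N * B) < \<epsilon>/2"
  proof -
    have "\<delta> * (real N * B) = (\<epsilon>/2) * (real N * B / (real N * B + 1))"
      unfolding \<delta>_def by (simp add: field_simps)
    also have "\<dots> < (\<epsilon>/2) * 1" using \<epsilon> NB0 by (intro mult_strict_left_mono) auto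
    finally show ?thesis by simp
  qed
  have ev0: "eventually (\<lambda>r. r \<in> {max 0 (1 - \<delta>)<..<1}) (at_left 1)"
    using eventually_at_left_real[of "max 0 (1 - \<delta>)" 1] \<delta>0 by simp
  show "eventually (\<lambda>r. dist ((1-r) * (\<Sum>k. e k * r^k)) 0 < \<epsilon>) (at_left 1)"
    using ev0
  proof (rule eventually_mono)
    fix r assume "r \<in> {max 0 (1 - \<delta>)<..<1}"
    then have r: "0 < r" "r < 1" "1 - r < \<delta>" by auto
    define b where "b k = (if k < N then B else 0) + (\<epsilon>/2) * r^k" for k
    have sg: "summable (\<lambda>k. r^k)" using r by simp
    have sb1: "summable (\<lambda>k. if k < N then B else (0::real))"
      by (rule summable_finite[of "{..<N}"]) auto
    have sb: "summable b" unfolding b_def by (intro summable_add sb1 summable_mult sg)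
    have le: "norm (e k * r^k) \<le> b k" for k
    proof (cases "k < N")
      case True
      have "\<bar>e k\<bar> * r^k \<le> B * 1" using B[of k] r
        by (intro mult_mono) (auto simp: power_le_one real_norm_def)
      then have "norm (e k * r^k) \<le> B * 1" using r by (simp add: abs_mult)
      moreover have "0 \<le> (\<epsilon>/2) * r^k" using \<epsilon> r by simp
      ultimately show ?thesis using True unfolding b_def by simp
    next
      case False
      have "norm (e k * r^k) \<le> (\<epsilon>/2) * r^k" using N[of k] False r
        by (simp add: abs_mult mult_right_mono)
      then show ?thesis using False unfolding b_def by simp
    qed
    have se: "summable (\<lambda>k. e k * r^k)" by (rule summable_comparison_test'[OF sb, of 0]) (use le in auto)
    have sn: "summable (\<lambda>k. norm (e k * r^k))" by (rule summable_comparison_test'[OF sb, of 0]) (use le in auto)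
    have "norm (\<Sum>k. e k * r^k) \<le> (\<Sum>k. norm (e k * r^k))" by (rule summable_norm[OF sn])
    also have "\<dots> \<le> (\<Sum>k. b k)" by (rule suminf_le[OF le sn sb])
    also have "(\<Sum>k. b k) = (\<Sum>k. (if k < N then B else 0)) + (\<Sum>k. (\<epsilon>/2) * r^k)"
      unfolding b_def by (rule suminf_add[OF sb1 summable_mult[OF sg], symmetric])
    also have "(\<Sum>k. (\<epsilon>/2) * r^k) = (\<epsilon>/2) * (\<Sum>k. r^k)" by (rule suminf_mult[OF sg])
    also have "(\<Sum>k. (if k < N then B else (0::real))) = real N * B"
      by (subst suminf_finite[of "{..<N}"]) auto
    also have "(\<Sum>k. r^k) = 1 / (1 - r)" using r by (simp add: suminf_geometric)
    finally have bnd: "\<bar>\<Sum>k. e k * r^k\<bar> \<le> real N * B + (\<epsilon>/2) * (1 / (1 - r))" by simp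
    have "\<bar>(1-r) * (\<Sum>k. e k * r^k)\<bar> = (1-r) * \<bar>\<Sum>k. e k * r^k\<bar>" using r by (simp add: abs_mult)
    also have "\<dots> \<le> (1-r) * (real N * B + (\<epsilon>/2) * (1 / (1 - r)))"
      using bnd r by (intro mult_left_mono) auto
    also have "\<dots> = (1-r) * (real N * B) + \<epsilon>/2" using r by (simp add: field_simps)
    also have "(1-r) * (real N * B) \<le> \<delta> * (real N * B)" using r NB0 by (intro mult_right_mono) auto
    finally show "dist ((1-r) * (\<Sum>k. e k * r^k)) 0 < \<epsilon>" using \<delta>NB by simp
  qed
qed

lemma abel:
  fixes c :: "nat \<Rightarrow> real"
  assumes cL: "c \<longlonglongrightarrow> L" and sm: "\<And>r. 0 \<le> r \<Longrightarrow> r < 1 \<Longrightarrow> summable (\<lambda>k. c k * r^k)"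
  shows "((\<lambda>r. (1-r) * (\<Sum>k. c k * r^k)) \<longlongrightarrow> L) (at_left 1)"
proof -
  have e0: "(\<lambda>k. c k - L) \<longlonglongrightarrow> 0" using cL by (simp add: LIM_zero)
  have "((\<lambda>r. (1-r) * (\<Sum>k. (c k - L) * r^k) + L) \<longlongrightarrow> 0 + L) (at_left 1)"
    by (intro tendsto_intros abel0[OF e0])
  moreover have "eventually (\<lambda>r. (1-r) * (\<Sum>k. (c k - L) * r^k) + L = (1-r) * (\<Sum>k. c k * r^k)) (at_left 1)"
    using eventually_at_left_real[of 0 1, OF zero_less_one]
  proof (rule eventually_mono)
    fix r :: real assume "r \<in> {0<..<1}"
    then have r: "0 < r" "r < 1" by auto
    have sg: "summable (\<lambda>k. L * r^k)" using r by (intro summable_mult) simp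
    have e1: "(\<Sum>k. (c k - L) * r^k) = (\<Sum>k. c k * r^k - L * r^k)" by (simp add: left_diff_distrib)
    have smr: "summable (\<lambda>k. c k * r^k)" using sm r by simp
    have e2: "(\<Sum>k. c k * r^k - L * r^k) = (\<Sum>k. c k * r^k) - (\<Sum>k. L * r^k)" by (rule suminf_diff[OF smr sg, symmetric])
    have e3: "(\<Sum>k. L * r^k) = L / (1 - r)" using r by (simp add: suminf_mult suminf_geometric)
    show "(1-r) * (\<Sum>k. (c k - L) * r^k) + L = (1-r) * (\<Sum>k. c k * r^k)"
      unfolding e1 e2 e3 using r by (simp add: field_simps)
  qed
  ultimately show ?thesis by (simp add: tendsto_cong)
qed

context st2 begin

lemma w_const:
  assumes nm: "1 \<le> n" "1 \<le> m"
  shows "c n - fh n / pi = c m - fh m / pi"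
proof -
  obtain M where M: "eventually (\<lambda>r. integral {0..2*pi} (\<lambda>\<theta>. \<bar>u r \<theta>\<bar>) \<le> M) (at_left 1)"
    using total_bound by blast
  define Q where "Q = M + integral {0..2*pi} (\<lambda>\<theta>. \<bar>f \<theta>\<bar>)"
  define K where "K = (real n ^ 2 + real m ^ 2) / 2"
  define E where "E = \<bar>pi * (c n - c m) - (fh n - fh m)\<bar>"
  have lim: "((\<lambda>e. K * e^2 * Q) \<longlongrightarrow> K * 0^2 * Q) (at_right 0)"
    by (intro tendsto_intros)
  have ev0: "eventually (\<lambda>e. e \<in> {0<..<eta}) (at_right 0)"
    using eventually_at_right_real[of 0 eta] eta by simp
  have ev: "eventually (\<lambda>e. E \<le> K * e^2 * Q) (at_right 0)"
    using ev0
  proof (rule eventually_mono)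
    fix e assume "e \<in> {0<..<eta}"
    then show "E \<le> K * e^2 * Q" unfolding E_def K_def Q_def
      by (intro key_est[OF nm _ _ M]) auto
  qed
  have "E \<le> K * 0^2 * Q" by (rule tendsto_le[OF _ lim tendsto_const ev]) simp
  then have "E = 0" unfolding E_def by simp
  then have "pi * (c n - c m) = fh n - fh m" unfolding E_def by simp
  then show ?thesis using pi_neq_zero by (simp add: field_simps)
qed

lemma c_conv: "c \<longlonglongrightarrow> c 1 - fh 1 / pi"
proof -
  have "(\<lambda>n. (c 1 - fh 1 / pi) + fh n / pi) \<longlonglongrightarrow> (c 1 - fh 1 / pi) + 0 / pi"
    unfolding fh_def by (intro tendsto_intros RL f_ai) (use pi_gt_zero in simp)
  moreover have "eventually (\<lambda>n. (c 1 - fh 1 / pi) + fh n / pi = c n) sequentially"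
    using eventually_ge_at_top[of 1]
  proof (rule eventually_mono)
    fix n :: nat assume "1 \<le> n"
    then show "(c 1 - fh 1 / pi) + fh n / pi = c n" using w_const[of n 1] by simp
  qed
  ultimately show ?thesis by (simp add: tendsto_cong)
qed

end

theorem theorem1p4:
  fixes c :: "nat \<Rightarrow> real" and \<theta>0 :: real
  assumes conv: "\<And>z. norm z < 1 \<Longrightarrow> summable (\<lambda>n. complex_of_real (c n) * z ^ n)"
    and bdry: "L1loc_boundary (psU c)"
    and th0: "0 < \<theta>0" "\<theta>0 < pi"
    and b: "(\<exists>C\<ge>0. \<forall>\<theta>\<in>{-\<theta>0<..<\<theta>0}. \<forall>r\<in>{0..<1}.
                 psU c (complex_of_real r * cis \<theta>) \<ge> - C)
          \<or> (\<exists>M. \<forall>r\<in>{0<..<1}.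
                 integral {-\<theta>0..\<theta>0} (\<lambda>\<theta>. \<bar>psU c (complex_of_real r * cis \<theta>)\<bar>) \<le> M)
          \<or> (\<exists>(g :: real \<Rightarrow> real) (k :: nat) K.
                 g absolutely_integrable_on {-\<theta>0..\<theta>0} \<and>
                 (\<forall>\<theta>\<in>{-\<theta>0<..<\<theta>0}. \<forall>r\<in>{0..<1}.
                    \<bar>psU c (complex_of_real r * cis \<theta>)\<bar> \<le> K / (1 - r) ^ k) \<and>
                 (AE \<theta> in lebesgue. \<theta> \<in> {-\<theta>0<..<\<theta>0} \<longrightarrow>
                    (\<forall>r\<in>{0..<1}. g \<theta> \<le> psU c (complex_of_real r * cis \<theta>))))"
  shows "\<exists>L. c \<longlonglongrightarrow> L \<and>
           ((\<lambda>r. (1 - r) * psU c (complex_of_real r)) \<longlongrightarrow> L) (at_left 1)"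
proof -
  obtain f where fint: "\<forall>a b. 0 < a \<longrightarrow> b < 2 * pi \<longrightarrow> f absolutely_integrable_on {a..b}"
    and flim: "\<forall>a b. 0 < a \<longrightarrow> a \<le> b \<longrightarrow> b < 2 * pi \<longrightarrow>
           ((\<lambda>r. integral {a..b} (\<lambda>\<theta>. \<bar>psU c (complex_of_real r * cis \<theta>) - f \<theta>\<bar>)) \<longlongrightarrow> 0) (at_left 1)"
    using bdry unfolding L1loc_boundary_def by blast
  interpret S: st c f \<theta>0
  proof (unfold_locales)
    show "summable (\<lambda>n. complex_of_real (c n) * z ^ n)" if "norm z < 1" for z using conv that .
    show "f absolutely_integrable_on {a..b}" if "0 < a" "b < 2*pi" for a b using fint that by blast
    show "((\<lambda>r. integral {a..b} (\<lambda>\<theta>. \<bar>psU c (complex_of_real r * cis \<theta>) - f \<theta>\<bar>)) \<longlongrightarrow> 0) (at_left 1)"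
      if "0 < a" "a \<le> b" "b < 2*pi" for a b using flim that by blast
  qed (use th0 in auto)
  have near: "\<exists>Mn. eventually (\<lambda>r. integral {-S.eta..S.eta} (\<lambda>\<theta>. \<bar>psU c (complex_of_real r * cis \<theta>)\<bar>) \<le> Mn) (at_left 1)"
    using b
  proof (elim disjE exE conjE)
    fix C :: real assume "0 \<le> C" and hC: "\<forall>\<theta>\<in>{-\<theta>0<..<\<theta>0}. \<forall>r\<in>{0..<1}. psU c (complex_of_real r * cis \<theta>) \<ge> - C"
    show ?thesis
    proof (rule S.near_bound_g[of "\<lambda>_. - C"])
      show "(\<lambda>_. - C) absolutely_integrable_on {-\<theta>0..\<theta>0}" by (rule ai_const)
      show "AE \<theta> in lebesgue. \<theta> \<in> {-\<theta>0<..<\<theta>0} \<longrightarrow> (\<forall>r\<in>{0..<1}. - C \<le> psU c (complex_of_real r * cis \<theta>))"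
        using hC by (intro AE_I2) blast
    qed
  next
    fix M assume "\<forall>r\<in>{0<..<1}. integral {-\<theta>0..\<theta>0} (\<lambda>\<theta>. \<bar>psU c (complex_of_real r * cis \<theta>)\<bar>) \<le> M"
    then show ?thesis by (rule S.near_bound_b2)
  next
    fix g :: "real \<Rightarrow> real" and k :: nat and K :: real
    assume "g absolutely_integrable_on {-\<theta>0..\<theta>0}"
      and "AE \<theta> in lebesgue. \<theta> \<in> {-\<theta>0<..<\<theta>0} \<longrightarrow> (\<forall>r\<in>{0..<1}. g \<theta> \<le> psU c (complex_of_real r * cis \<theta>))"
    then show ?thesis by (rule S.near_bound_g)
  qed
  interpret S2: st2 c f \<theta>0
    by (intro st2.intro S.st_axioms st2_axioms.intro near)
  define L where "L = c 1 - S2.fh 1 / pi"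
  have cL: "c \<longlonglongrightarrow> L" unfolding L_def by (rule S2.c_conv)
  have sm: "summable (\<lambda>k. c k * r^k)" if "0 \<le> r" "r < 1" for r
  proof (rule summable_rabs_cancel)
    show "summable (\<lambda>k. \<bar>c k * r^k\<bar>)" using S.abs_summ[OF that] that by (simp add: abs_mult)
  qed
  have ab: "((\<lambda>r. (1-r) * (\<Sum>k. c k * r^k)) \<longlongrightarrow> L) (at_left 1)"
    by (rule abel[OF cL sm])
  have ev: "eventually (\<lambda>r. (1-r) * (\<Sum>k. c k * r^k) = (1 - r) * psU c (complex_of_real r)) (at_left 1)"
    using eventually_at_left_real[of 0 1, OF zero_less_one]
  proof (rule eventually_mono)
    fix r :: real assume "r \<in> {0<..<1}"
    then have r: "0 \<le> r" "r < 1" by auto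
    show "(1-r) * (\<Sum>k. c k * r^k) = (1 - r) * psU c (complex_of_real r)"
      using S.u_series[OF r, of 0] by simp
  qed
  have "((\<lambda>r. (1 - r) * psU c (complex_of_real r)) \<longlongrightarrow> L) (at_left 1)"
    by (rule iffD1[OF tendsto_cong[OF ev] ab])
  then show ?thesis using cL by blast
qed

end
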